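(* Let $d\geq 1$ and let $\lambda=(\lambda_1,\dots,\lambda_d)$ be a partition of length at most $d$ (i.e. integers $\lambda_1\geq\lambda_2\geq\dots\geq\lambda_d\geq 0$). Then the factorial Grothendieck polynomial $G_\lambda(x|b)$ satisfies \[ G_{\lambda}(x|b) = \det\left(\sum_{s\geq 0} \binom{i-d}{s} \beta^s\,G_{\lambda_i+j-i+s}^{(\lambda_i+d-i)}(x|b)\right)_{1\leq i,j\leq d} = \det\left(\sum_{s\geq 0} \binom{i-j}{s} \beta^s\,G_{\lambda_i+j-i+s}^{(\lambda_i+d-i)}(x|b)\right)_{1\leq i,j\leq d}. \] In particular, for every integer $k\geq 0$, $G_{(k,0,\dots,0)}(x|b) = G_k^{(k+d-1)}(x|b)$.
   Context: Let $x=(x_1,\dots,x_d)$ and $b=(b_1,b_2,\dots)$ be sets of indeterminates and $\beta$ a further formal variable (of degree $-1$); all expressions live in the ring $\mathbb{Z}[\beta,b_1,b_2,\dots][[x_1,\dots,x_d]]$. For variables $x,y$ set $x\oplus y:=x+y+\beta xy$ and $[y|b]^k:=(y\oplus b_1)(y\oplus b_2)\cdots(y\oplus b_k)$ for $k\geq 0$. For a partition $\lambda$ of length at most $d$, the factorial Grothendieck polynomial is \[ G_{\lambda}(x|b) =\frac{\det\left([x_j|b]^{\lambda_i+d-i}(1+\beta x_j)^{i-1}\right)_{1\leq i,j\leq d}}{\prod_{1\leq i<j\leq d}(x_i-x_j)} \] (this bi-alternant expression agrees with McNamara's definition via set-valued tableaux). For each integer $k\geq 0$ define $G_m^{(k)}(x|b)$,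 $m\in\mathbb{Z}$, by the generating function \[ \sum_{m\in\mathbb{Z}} G_m^{(k)}(x|b)\,u^m := \frac{1}{1+\beta u^{-1}}\prod_{i=1}^d\frac{1+\beta x_i}{1- x_i u} \prod_{j=1}^{k} \bigl(1+ (u+\beta)b_j\bigr), \] where $\frac{1}{1+\beta u^{-1}}$ is expanded as $\sum_{s\geq 0}(-1)^s\beta^s u^{-s}$ and $\frac{1}{1-x_iu}=\sum_{n\ge0}x_i^nu^n$. The binomial coefficients are generalized: for $n\in\mathbb{Z}$, $\binom{n}{i}$ is defined by $(1+x)^n=\sum_{i\geq0}\binom{n}{i}x^i$, with $\binom{n}{-i}=0$ for integers $i>0$. *)

theory Defs
  imports "HOL-Library.Poly_Mapping" "HOL-Computational_Algebra.Formal_Power_Series"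
          "Jordan_Normal_Form.Determinant"
begin

datatype var = XV nat | BV nat | BetaV

(* Z[beta, b_1, b_2, ..., x_1, x_2, ...]: polynomials with integer coefficients
   in the indeterminates above (monomials = finitely supported exponent maps). *)
type_synonym pol = "(var \<Rightarrow>\<^sub>0 nat) \<Rightarrow>\<^sub>0 int"

(* The ambient ring Z[beta,b][[x_1,...,x_d]] is realised inside pol[[t]] via the
   injective ring homomorphism x_i |-> t * x_i (t a grading variable, beta and
   b_j constants).  Infinite sums are taken w.r.t. the t-adic topology of fps,
   which restricts to the x-adic topology on the image. *)
type_synonym ser = "pol fps"

definition indet :: "var \<Rightarrow> ser" where
  "indet v = fps_const (Poly_Mapping.single (Poly_Mapping.single v 1) 1)"

definition xx :: "nat \<Rightarrow> ser" where "xx i = fps_X * indet (XV i)"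
definition bb :: "nat \<Rightarrow> ser" where "bb j = indet (BV j)"
definition bet :: ser where "bet = indet BetaV"

definition oplus :: "ser \<Rightarrow> ser \<Rightarrow> ser" where "oplus x y = x + y + bet * x * y"

definition fpow :: "ser \<Rightarrow> nat \<Rightarrow> ser" where
  "fpow y k = (\<Prod>l=1..k. oplus y (bb l))"

definition vdm :: "nat \<Rightarrow> ser" where
  "vdm d = (\<Prod>(i,j)\<in>{(i,j). 1 \<le> i \<and> i < j \<and> j \<le> d}. xx i - xx j)"

(* Numerator of the bi-alternant; rows i, columns j (1-based i = r+1, j = c+1) *)
definition galt :: "nat \<Rightarrow> (nat \<Rightarrow> nat) \<Rightarrow> ser" where
  "galt d lam = det (mat d d (\<lambda>(r,c). fpow (xx (c+1)) (lam (r+1) + d - (r+1))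
                                        * (1 + bet * xx (c+1)) ^ r))"

definition Gfact :: "nat \<Rightarrow> (nat \<Rightarrow> nat) \<Rightarrow> ser" where
  "Gfact d lam = (THE g. vdm d * g = galt d lam)"

definition genP :: "nat \<Rightarrow> nat \<Rightarrow> ser fps" where
  "genP d k = (\<Prod>i=1..d. fps_const (1 + bet * xx i) * Abs_fps (\<lambda>n. xx i ^ n))
              * (\<Prod>j=1..k. 1 + (fps_X + fps_const bet) * fps_const (bb j))"

definition coeffU :: "ser fps \<Rightarrow> int \<Rightarrow> ser" where
  "coeffU P n = (if n < 0 then 0 else fps_nth P (nat n))"

(* G_m^{(k)}(x|b): coefficient of u^m in (sum_s (-beta)^s u^{-s}) * genP d k *)
definition Gmk :: "nat \<Rightarrow> nat \<Rightarrow> int \<Rightarrow> ser" where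
  "Gmk d k m = suminf (\<lambda>s. (- bet) ^ s * coeffU (genP d k) (m + int s))"

(* generalized binomial coefficient binom(n,s), n \<in> Z: coefficient of x^s in (1+x)^n *)
definition gbin :: "int \<Rightarrow> nat \<Rightarrow> int" where
  "gbin n s = (if 0 \<le> n then int (nat n choose s)
                else (-1) ^ s * int ((nat (- n) + s - 1) choose s))"
(* for n = -m < 0:  (1+x)^(-m) = sum_s (-1)^s binom(m+s-1, s) x^s *)

end

theory Submission imports Defs begin

fun venc :: "var \<Rightarrow> nat" where
  "venc BetaV = 0" | "venc (XV n) = 2*n+1" | "venc (BV n) = 2*n+2"

lemma venc_inj: "venc a = venc b \<Longrightarrow> a = b"
  by (cases a; cases b; simp; presburger)

instantiation var :: linorder
begin
definition "less_eq_var a b \<longleftrightarrow> venc a \<le> venc b"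
definition "less_var a b \<longleftrightarrow> venc a < venc b"
instance by standard (auto simp: less_eq_var_def less_var_def intro: venc_inj)
end

lemma "(x::ser) * y = 0 \<Longrightarrow> x = 0 \<or> y = 0" by simp
lemma "OFCLASS(ser, idom_class)" by intro_classes

definition ordI :: "int \<Rightarrow> 'a::zero fps \<Rightarrow> bool" where
  "ordI n a \<longleftrightarrow> (\<forall>m. int m < n \<longrightarrow> fps_nth (a) m = 0)"

definition cvg :: "int \<Rightarrow> (nat \<Rightarrow> 'a::zero fps) \<Rightarrow> bool" where
  "cvg K f \<longleftrightarrow> (\<forall>s. ordI (int s - K) (f s))"

lemma ordI_le0: "n \<le> 0 \<Longrightarrow> ordI n a" by (auto simp: ordI_def)
lemma ordI_mono: "ordI n a \<Longrightarrow> k \<le> n \<Longrightarrow> ordI k a" by (auto simp: ordI_def)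
lemma ordI_0[simp]: "ordI n 0" by (auto simp: ordI_def)
lemma ordI_add: "ordI n a \<Longrightarrow> ordI n b \<Longrightarrow> ordI n (a + (b::'a::comm_ring_1 fps))" by (auto simp: ordI_def)
lemma ordI_diff: "ordI n a \<Longrightarrow> ordI n (b::'a::ab_group_add fps) \<Longrightarrow> ordI n (a - b)" by (auto simp: ordI_def)
lemma ordI_sum: "(\<And>i. i \<in> A \<Longrightarrow> ordI n (f i)) \<Longrightarrow> ordI n (sum f A :: 'a::comm_ring_1 fps)"
  by (induct A rule: infinite_finite_induct) (auto intro: ordI_add)
lemma ordI_mult: "ordI a x \<Longrightarrow> ordI b (y::'a::comm_ring_1 fps) \<Longrightarrow> ordI (a+b) (x*y)"
  unfolding ordI_def fps_mult_nth
proof (intro allI impI)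
  fix m assume x: "\<forall>m. int m < a \<longrightarrow> fps_nth (x) m = 0" and y: "\<forall>m. int m < b \<longrightarrow> fps_nth (y) m = 0"
    and m: "int m < a + b"
  show "(\<Sum>i = 0..m. fps_nth (x) i * fps_nth (y) (m - i)) = 0"
  proof (rule sum.neutral, intro ballI)
    fix i assume "i \<in> {0..m}"
    then have "int i < a \<or> int (m - i) < b" using m by auto
    then show "fps_nth (x) i * fps_nth (y) (m - i) = 0" using x y by auto
  qed
qed
lemma ordI_mult0: "ordI a x \<Longrightarrow> ordI a (c * (x::'a::comm_ring_1 fps))"
  using ordI_mult[of 0 c a x] by (simp add: ordI_le0)
lemma ordI_mult0': "ordI a x \<Longrightarrow> ordI a ((x::'a::comm_ring_1 fps) * c)"
  using ordI_mult0[of a x c] by (simp add: mult.commute)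
lemma ordI_power: "ordI a x \<Longrightarrow> ordI (int n * a) ((x::'a::comm_ring_1 fps) ^ n)"
proof (induct n)
  case 0 then show ?case by (simp add: ordI_le0)
next
  case (Suc n) then show ?case using ordI_mult[of a x "int n * a" "x^n"] by (simp add: algebra_simps)
qed

lemma cvg_sums:
  assumes "cvg K f"
  shows "f sums Abs_fps (\<lambda>m. \<Sum>s<nat (int m + K) + 1. fps_nth (f s) m)"
  unfolding sums_def
proof (rule tendsto_fpsI)
  fix m
  let ?L = "nat (int m + K) + 1"
  show "\<forall>\<^sub>F n in sequentially. fps_nth (sum f {..<n}) m = fps_nth (Abs_fps (\<lambda>m. \<Sum>s<nat (int m + K) + 1. fps_nth (f s) m)) m"
  proof (rule eventually_sequentiallyI[of ?L])
    fix n assume n: "?L \<le> n"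
    have "fps_nth (sum f {..<n}) m = (\<Sum>s<n. fps_nth (f s) m)" by (simp add: fps_sum_nth)
    also have "\<dots> = (\<Sum>s<?L. fps_nth (f s) m)"
    proof (rule sum.mono_neutral_right)
      show "\<forall>i\<in>{..<n} - {..<?L}. fps_nth (f i) m = 0"
        using assms unfolding cvg_def ordI_def by force
    qed (use n in auto)
    finally show "fps_nth (sum f {..<n}) m = fps_nth (Abs_fps (\<lambda>m. \<Sum>s<nat (int m + K) + 1. fps_nth (f s) m)) m" by simp
  qed
qed

lemma cvg_summable: "cvg K f \<Longrightarrow> summable f"
  using cvg_sums summable_def by blast

lemma cvg_nth:
  assumes "cvg K f" "int m + K < int L"
  shows "fps_nth (suminf f) m = (\<Sum>s<L. fps_nth (f s) m)"
proof -
  have "fps_nth (suminf f) m = (\<Sum>s<nat (int m + K) + 1. fps_nth (f s) m)"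
    using sums_unique[OF cvg_sums[OF assms(1)], symmetric] by simp
  also have "\<dots> = (\<Sum>s<nat (int m + K) + 1 + L. fps_nth (f s) m)"
    by (rule sum.mono_neutral_left) (use assms in \<open>auto simp: cvg_def ordI_def\<close>)
  also have "\<dots> = (\<Sum>s<L. fps_nth (f s) m)"
    by (rule sum.mono_neutral_right) (use assms in \<open>auto simp: cvg_def ordI_def\<close>)
  finally show ?thesis .
qed


lemma cvg_mono: "cvg K f \<Longrightarrow> K \<le> K' \<Longrightarrow> cvg K' f"
  unfolding cvg_def by (meson ordI_mono diff_left_mono)
lemma cvg_mult_left: "cvg K f \<Longrightarrow> cvg K (\<lambda>s. c * (f s :: 'a::comm_ring_1 fps))"
  unfolding cvg_def by (auto intro: ordI_mult0)
lemma cvg_mult_right: "cvg K f \<Longrightarrow> cvg K (\<lambda>s. (f s :: 'a::comm_ring_1 fps) * c)"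
  unfolding cvg_def by (auto intro: ordI_mult0')
lemma cvg_add: "cvg K f \<Longrightarrow> cvg K g \<Longrightarrow> cvg K (\<lambda>s. f s + (g s :: 'a::comm_ring_1 fps))"
  unfolding cvg_def by (auto intro: ordI_add)
lemma cvg_sum: "(\<And>j. j \<in> J \<Longrightarrow> cvg K (f j)) \<Longrightarrow> cvg K (\<lambda>s. \<Sum>j\<in>J. (f j s :: 'a::comm_ring_1 fps))"
  unfolding cvg_def by (auto intro: ordI_sum)
lemma cvg_finite: "(\<And>s. L \<le> s \<Longrightarrow> f s = 0) \<Longrightarrow> cvg (int L) f"
  unfolding cvg_def
proof (intro allI)
  fix s assume "\<And>s. L \<le> s \<Longrightarrow> f s = 0"
  then show "ordI (int s - int L) (f s)" by (cases "L \<le> s") (auto intro: ordI_le0)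
qed

lemma suminf_mult_left:
  assumes "cvg K f"
  shows "c * suminf f = suminf (\<lambda>s. c * (f s :: 'a::comm_ring_1 fps))"
proof (rule fps_ext)
  fix m
  define L where "L = nat (int m + K) + 1"
  have "fps_nth (c * suminf f) m = (\<Sum>i=0..m. fps_nth c i * fps_nth (suminf f) (m - i))"
    by (simp add: fps_mult_nth)
  also have "\<dots> = (\<Sum>i=0..m. fps_nth c i * (\<Sum>s<L. fps_nth (f s) (m - i)))"
    by (intro sum.cong refl, subst cvg_nth[OF assms, where L=L]) (auto simp: L_def)
  also have "\<dots> = (\<Sum>s<L. fps_nth (c * f s) m)"
    by (simp add: fps_mult_nth sum_distrib_left sum.swap[of _ "{0..m}"])
  also have "\<dots> = fps_nth (suminf (\<lambda>s. c * f s)) m"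
    by (rule cvg_nth[OF cvg_mult_left[OF assms], symmetric]) (auto simp: L_def)
  finally show "fps_nth (c * suminf f) m = fps_nth (suminf (\<lambda>s. c * f s)) m" .
qed

lemma suminf_mult_right:
  assumes "cvg K f"
  shows "suminf f * c = suminf (\<lambda>s. (f s :: 'a::comm_ring_1 fps) * c)"
  using suminf_mult_left[OF assms, of c] by (simp add: mult.commute)

lemma suminf_sum:
  assumes "finite J" "\<And>j. j \<in> J \<Longrightarrow> cvg K (f j)"
  shows "suminf (\<lambda>s. \<Sum>j\<in>J. f j s) = (\<Sum>j\<in>J. suminf (f j) :: 'a::comm_ring_1 fps)"
proof (rule fps_ext)
  fix m
  define L where "L = nat (int m + K) + 1"
  have "fps_nth (suminf (\<lambda>s. \<Sum>j\<in>J. f j s)) m = (\<Sum>s<L. fps_nth (\<Sum>j\<in>J. f j s) m)"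
    by (rule cvg_nth[OF cvg_sum]) (use assms in \<open>auto simp: L_def\<close>)
  also have "\<dots> = (\<Sum>j\<in>J. (\<Sum>s<L. fps_nth (f j s) m))"
    by (simp add: fps_sum_nth sum.swap[of _ J])
  also have "\<dots> = (\<Sum>j\<in>J. fps_nth (suminf (f j)) m)"
    by (intro sum.cong refl cvg_nth[symmetric]) (use assms in \<open>auto simp: L_def\<close>)
  finally show "fps_nth (suminf (\<lambda>s. \<Sum>j\<in>J. f j s)) m = fps_nth (\<Sum>j\<in>J. suminf (f j)) m"
    by (simp add: fps_sum_nth)
qed

lemma suminf_add2:
  assumes "cvg K f" "cvg K g"
  shows "suminf (\<lambda>s. f s + g s) = suminf f + (suminf g :: 'a::comm_ring_1 fps)"
  using suminf_sum[of "{True,False}" K "\<lambda>b. if b then f else g"] assms by simp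

lemma suminf_finite':
  assumes "\<And>s. L \<le> s \<Longrightarrow> f s = 0"
  shows "suminf f = (\<Sum>s<L. f s :: 'a::comm_ring_1 fps)"
proof (rule fps_ext)
  fix m
  show "fps_nth (suminf f) m = fps_nth (\<Sum>s<L. f s) m"
  proof -
    have "fps_nth (suminf f) m = (\<Sum>s<L + m + 1. fps_nth (f s) m)"
      by (rule cvg_nth[OF cvg_finite[OF assms]]) auto
    also have "\<dots> = (\<Sum>s<L. fps_nth (f s) m)"
      by (rule sum.mono_neutral_right) (use assms in auto)
    finally show ?thesis by (simp add: fps_sum_nth)
  qed
qed

lemma ordI_suminf: "cvg K f \<Longrightarrow> (\<And>s. ordI c (f s)) \<Longrightarrow> ordI c (suminf f :: 'a::comm_ring_1 fps)"
  unfolding ordI_def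
proof (intro allI impI)
  fix m assume K: "cvg K f" and h: "\<And>s. \<forall>m. int m < c \<longrightarrow> fps_nth (f s) m = 0" and m: "int m < c"
  show "fps_nth (suminf f) m = 0"
    by (subst cvg_nth[OF K, where L="nat (int m + K) + 1"]) (use h m in auto)
qed

lemma suminf_DS:
  fixes w :: "nat \<Rightarrow> nat \<Rightarrow> 'a::comm_ring_1 fps"
  assumes w: "\<And>s r. ordI (int s + int r - K) (w s r)"
  shows "suminf (\<lambda>s. suminf (\<lambda>r. w s r)) = suminf (\<lambda>n. \<Sum>s\<le>n. w s (n - s))"
proof (rule fps_ext)
  fix m
  define L where "L = nat (int m + K) + 1"
  have c1: "cvg (K - int s) (\<lambda>r. w s r)" for s
    unfolding cvg_def using w by (metis add.commute diff_diff_eq2)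
  have c2: "cvg K (\<lambda>s. suminf (\<lambda>r. w s r))"
    unfolding cvg_def
    by (intro allI ordI_suminf[OF c1] ordI_mono[OF w]) simp
  have c3: "cvg K (\<lambda>n. \<Sum>s\<le>n. w s (n - s))"
    unfolding cvg_def
  proof (intro allI ordI_sum)
    fix n :: nat and i assume "i \<in> {..n}"
    then show "ordI (int n - K) (w i (n - i))" using w[of i "n - i"] by (simp add: of_nat_diff)
  qed
  have z: "fps_nth (w s r) m = 0" if "L \<le> s + r" for s r
    using w[of s r] that unfolding ordI_def L_def by auto
  have "fps_nth (suminf (\<lambda>s. suminf (\<lambda>r. w s r))) m = (\<Sum>s<L. fps_nth (suminf (\<lambda>r. w s r)) m)"
    by (rule cvg_nth[OF c2]) (auto simp: L_def)
  also have "\<dots> = (\<Sum>s<L. \<Sum>r<L. fps_nth (w s r) m)"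
    by (intro sum.cong refl cvg_nth[OF c1]) (auto simp: L_def)
  also have "\<dots> = (\<Sum>(s,r)\<in>{..<L}\<times>{..<L}. fps_nth (w s r) m)"
    by (simp add: sum.cartesian_product)
  also have "\<dots> = (\<Sum>(s,r)\<in>{(s,r). s + r < L}. fps_nth (w s r) m)"
    by (rule sum.mono_neutral_right) (auto, metis not_le z)
  also have "\<dots> = (\<Sum>n<L. \<Sum>s\<le>n. fps_nth (w s (n - s)) m)"
    by (rule sum.triangle_reindex)
  also have "\<dots> = fps_nth (suminf (\<lambda>n. \<Sum>s\<le>n. w s (n - s))) m"
    by (subst cvg_nth[OF c3, where L=L]) (auto simp: L_def fps_sum_nth)
  finally show "fps_nth (suminf (\<lambda>s. suminf (w s))) m = fps_nth (suminf (\<lambda>n. \<Sum>s\<le>n. w s (n - s))) m" by simp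
qed

lemma suminf_cauchy:
  fixes f g :: "nat \<Rightarrow> 'a::comm_ring_1 fps"
  assumes "cvg K1 f" "cvg K2 g"
  shows "suminf f * suminf g = suminf (\<lambda>n. \<Sum>s\<le>n. f s * g (n - s))"
proof -
  have "suminf f * suminf g = suminf (\<lambda>s. f s * suminf g)"
    by (rule suminf_mult_right[OF assms(1)])
  also have "\<dots> = suminf (\<lambda>s. suminf (\<lambda>r. f s * g r))"
    by (simp add: suminf_mult_left[OF assms(2)])
  also have "\<dots> = suminf (\<lambda>n. \<Sum>s\<le>n. f s * g (n - s))"
  proof (rule suminf_DS)
    fix s r
    show "ordI (int s + int r - (K1 + K2)) (f s * g r)"
      using ordI_mult[of "int s - K1" "f s" "int r - K2" "g r"] assms
      unfolding cvg_def by (simp add: algebra_simps)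
  qed
  finally show ?thesis .
qed


section \<open>generalized binomials\<close>

lemma gbin_0[simp]: "gbin a 0 = 1"
  by (simp add: gbin_def)

lemma gbin_pascal: "gbin a (Suc n) = gbin (a - 1) (Suc n) + gbin (a - 1) n"
proof (cases "a \<ge> 1")
  case True
  define m where "m = nat (a - 1)"
  have m: "nat a = Suc m" "nat (a - 1) = m" using True by (auto simp: m_def)
  then show ?thesis using True by (simp add: gbin_def)
next
  case False
  show ?thesis
  proof (cases "a = 0")
    case True
    then show ?thesis by (simp add: gbin_def)
  next
    case False
    define m where "m = nat (- a)"
    have m: "a = - int m" "m \<ge> 1" using False \<open>\<not> a \<ge> 1\<close> by (auto simp: m_def)
    have n1: "nat (- a) = m" "nat (- (a - 1)) = m + 1" using m by auto
    have ch: "(m + n choose Suc n) + (m + n choose n) = (Suc (m + n) choose Suc n)" by simp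
    have "gbin (a - 1) (Suc n) + gbin (a - 1) n
          = (-1) ^ Suc n * int (Suc (m + n) choose Suc n) + (-1) ^ n * int (m + n choose n)"
      using m n1 by (simp add: gbin_def)
    also have "\<dots> = (-1) ^ Suc n * int (m + n choose Suc n)"
      by (subst ch[symmetric]) (simp add: algebra_simps)
    also have "\<dots> = gbin a (Suc n)" using m n1 \<open>m \<ge> 1\<close> by (simp add: gbin_def)
    finally show ?thesis ..
  qed
qed

lemma gbin_nonneg_big: "0 \<le> a \<Longrightarrow> a < int n \<Longrightarrow> gbin a n = 0"
  by (simp add: gbin_def)

lemma gbin_zero: "gbin 0 n = (if n = 0 then 1 else 0)"
  by (simp add: gbin_def)

lemma gbin_m1: "gbin (-1) n = (-1) ^ n"
  by (simp add: gbin_def)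

definition Bser :: "int \<Rightarrow> int fps" where "Bser a = Abs_fps (gbin a)"

lemma Bser_step: "Bser a = (1 + fps_X) * Bser (a - 1)"
proof (rule fps_ext)
  fix n show "fps_nth (Bser a) n = fps_nth ((1 + fps_X) * Bser (a - 1)) n"
  proof (cases n)
    case 0 then show ?thesis by (simp add: Bser_def distrib_right)
  next
    case (Suc k)
    have "fps_nth ((1 + fps_X) * Bser (a - 1)) n = gbin (a - 1) (Suc k) + gbin (a - 1) k"
      by (simp add: Suc Bser_def distrib_right)
    also have "\<dots> = fps_nth (Bser a) n" by (simp add: Suc Bser_def gbin_pascal[of a k])
    finally show ?thesis ..
  qed
qed

lemma Bser_shift: "Bser (c + int n) = (1 + fps_X) ^ n * Bser c"
proof (induct n)
  case 0 then show ?case by simp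
next
  case (Suc n)
  have "Bser (c + int (Suc n)) = (1 + fps_X) * Bser (c + int n)"
    using Bser_step[of "c + int (Suc n)"] by simp
  then show ?case using Suc by simp
qed

lemma Bser_0: "Bser 0 = 1"
  by (rule fps_ext) (simp add: Bser_def gbin_zero)

lemma Bser_nonneg: "0 \<le> c \<Longrightarrow> Bser c = (1 + fps_X) ^ nat c"
  using Bser_shift[of 0 "nat c"] by (simp add: Bser_0)

lemma Bser_mult: "Bser a * Bser b = Bser (a + b)"
proof -
  define m1 where "m1 = nat (- a)"
  define m2 where "m2 = nat (- b)"
  let ?u = "1 + fps_X :: int fps"
  have u: "?u ^ k \<noteq> 0" for k
  proof -
    have "fps_nth (?u ^ k) 0 = 1" by (induct k) auto
    then show ?thesis by (metis fps_zero_nth zero_neq_one)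
  qed
  have "?u ^ (m1 + m2) * (Bser a * Bser b) = (?u ^ m1 * Bser a) * (?u ^ m2 * Bser b)"
    by (simp add: power_add algebra_simps)
  also have "\<dots> = Bser (a + int m1) * Bser (b + int m2)"
    by (simp add: Bser_shift)
  also have "\<dots> = ?u ^ (nat (a + int m1) + nat (b + int m2))"
    by (simp add: Bser_nonneg m1_def m2_def power_add)
  also have "nat (a + int m1) + nat (b + int m2) = nat ((a + b) + int (m1 + m2))"
    unfolding m1_def m2_def by (simp add: nat_add_distrib[symmetric])
  also have "?u ^ \<dots> = Bser ((a + b) + int (m1 + m2))"
    by (simp add: Bser_nonneg m1_def m2_def)
  also have "\<dots> = ?u ^ (m1 + m2) * Bser (a + b)"
    by (rule Bser_shift)
  finally show ?thesis using u[of "m1 + m2"] mult_left_cancel by blast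
qed

lemma gbin_conv: "gbin (a + b) n = (\<Sum>s\<le>n. gbin a s * gbin b (n - s))"
proof -
  have "gbin (a + b) n = fps_nth (Bser a * Bser b) n" by (simp only: Bser_mult) (simp add: Bser_def)
  also have "\<dots> = (\<Sum>s\<le>n. gbin a s * gbin b (n - s))"
    by (simp add: fps_mult_nth Bser_def atLeast0AtMost)
  finally show ?thesis .
qed


section \<open>Laurent-type coefficient sums\<close>

definition ordP :: "int \<Rightarrow> 'a::zero fps fps \<Rightarrow> bool" where
  "ordP K P \<longleftrightarrow> (\<forall>n. ordI (int n - K) (fps_nth P n))"

definition TT :: "ser fps \<Rightarrow> int \<Rightarrow> int \<Rightarrow> ser" where
  "TT P a N = suminf (\<lambda>n. of_int (gbin a n) * bet ^ n * coeffU P (N + int n))"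

lemma ordI_coeffU: assumes "ordP K P" shows "ordI (M - K) (coeffU P M)"
proof (cases "M < 0")
  case True then show ?thesis by (simp add: coeffU_def)
next
  case False
  from assms have "ordI (int (nat M) - K) (fps_nth P (nat M))" unfolding ordP_def by blast
  then show ?thesis using False by (simp add: coeffU_def)
qed

lemma cvg_T: "ordP K P \<Longrightarrow> cvg (K - N) (\<lambda>n. c n * coeffU P (N + int n))"
  unfolding cvg_def
  by (intro allI ordI_mult0) (drule ordI_coeffU[where M="N + int _"], simp add: algebra_simps)

lemma Gmk_T: "Gmk d k m = TT (genP d k) (-1) m"
  unfolding Gmk_def TT_def
proof (intro arg_cong[where f=suminf] ext)
  fix s
  have "(- bet) ^ s = ((-1) ^ s * bet ^ s :: ser)" by (rule power_minus)
  also have "\<dots> = of_int (gbin (-1) s) * bet ^ s" by (simp only: gbin_m1 of_int_power of_int_minus of_int_1)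
  finally show "(- bet) ^ s * coeffU (genP d k) (m + int s) = of_int (gbin (- 1) s) * bet ^ s * coeffU (genP d k) (m + int s)"
    by simp
qed

lemma ordI_TT: "ordP K P \<Longrightarrow> ordI (N - K) (TT P a N)"
  unfolding TT_def
proof (rule ordI_suminf[OF cvg_T])
  fix n assume "ordP K P"
  then show "ordI (N - K) (of_int (gbin a n) * bet ^ n * coeffU P (N + int n))"
    by (intro ordI_mult0 ordI_mono[OF ordI_coeffU]) auto
qed

lemma TT_conv:
  assumes P: "ordP K P"
  shows "suminf (\<lambda>s. of_int (gbin a s) * bet ^ s * TT P b (N + int s)) = TT P (a + b) N"
proof -
  define w where "w s r = of_int (gbin a s) * bet ^ s * (of_int (gbin b r) * bet ^ r * coeffU P (N + int s + int r))" for s r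
  have "suminf (\<lambda>s. of_int (gbin a s) * bet ^ s * TT P b (N + int s)) = suminf (\<lambda>s. suminf (\<lambda>r. w s r))"
    unfolding TT_def w_def
    by (intro arg_cong[where f=suminf] ext suminf_mult_left[OF cvg_T[OF P]])
  also have "\<dots> = suminf (\<lambda>n. \<Sum>s\<le>n. w s (n - s))"
  proof (rule suminf_DS)
    fix s r
    show "ordI (int s + int r - (K - N)) (w s r)"
      unfolding w_def
      by (intro ordI_mult0 ordI_mono[OF ordI_coeffU[OF P]]) (simp add: algebra_simps)
  qed
  also have "\<dots> = suminf (\<lambda>n. of_int (gbin (a + b) n) * bet ^ n * coeffU P (N + int n))"
  proof (intro arg_cong[where f=suminf] ext)
    fix n
    have "(\<Sum>s\<le>n. w s (n - s)) = (\<Sum>s\<le>n. of_int (gbin a s * gbin b (n - s)) * bet ^ n * coeffU P (N + int n))"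
    proof (intro sum.cong refl)
      fix s assume "s \<in> {..n}"
      then have "s \<le> n" by simp
      then have e: "N + int s + int (n - s) = N + int n" "bet ^ s * bet ^ (n - s) = (bet ^ n :: ser)"
        by (auto simp: of_nat_diff power_add[symmetric])
      show "w s (n - s) = of_int (gbin a s * gbin b (n - s)) * bet ^ n * coeffU P (N + int n)"
        unfolding w_def e(1) e(2)[symmetric] by (simp add: algebra_simps)
    qed
    also have "\<dots> = of_int (gbin (a + b) n) * bet ^ n * coeffU P (N + int n)"
      by (simp add: gbin_conv sum_distrib_right)
    finally show "(\<Sum>s\<le>n. w s (n - s)) = of_int (gbin (a + b) n) * bet ^ n * coeffU P (N + int n)" .
  qed
  finally show ?thesis unfolding TT_def .
qed


definition c0 :: "nat \<Rightarrow> ser" where "c0 d = (\<Prod>q=1..d. 1 + bet * xx q)"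
definition Gx :: "ser \<Rightarrow> ser fps" where "Gx x = Abs_fps (\<lambda>n. x ^ n)"
definition FF :: "nat \<Rightarrow> ser fps" where
  "FF k = (\<Prod>j=1..k. 1 + (fps_X + fps_const bet) * fps_const (bb j))"
definition Qp :: "nat \<Rightarrow> nat \<Rightarrow> ser fps" where
  "Qp d p = (\<Prod>q\<in>{1..d} - {p}. 1 - fps_const (xx q) * fps_X)"

lemma fps_const_prod: "fps_const (prod f S) = (\<Prod>i\<in>S. fps_const (f i) :: 'a::comm_ring_1 fps)"
  by (induct S rule: infinite_finite_induct) (auto simp: fps_const_mult[symmetric])

lemma nth0_prod: "fps_nth (prod f S) 0 = (\<Prod>i\<in>S. fps_nth (f i :: 'a::comm_ring_1 fps) 0)"
  by (induct S rule: infinite_finite_induct) auto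

lemma deg_mult:
  fixes f g :: "'a::comm_ring_1 fps"
  assumes "\<And>n. a < n \<Longrightarrow> fps_nth f n = 0" "\<And>n. b < n \<Longrightarrow> fps_nth g n = 0" "a + b < n"
  shows "fps_nth (f * g) n = 0"
  unfolding fps_mult_nth
proof (rule sum.neutral, intro ballI)
  fix i assume "i \<in> {0..n}"
  then have "a < i \<or> b < n - i" using assms(3) by auto
  then show "fps_nth f i * fps_nth g (n - i) = 0" using assms(1,2) by auto
qed

lemma deg_prod:
  fixes f :: "'b \<Rightarrow> 'a::comm_ring_1 fps"
  assumes "finite S" "\<And>q n. q \<in> S \<Longrightarrow> 1 < n \<Longrightarrow> fps_nth (f q) n = 0"
  shows "card S < n \<Longrightarrow> fps_nth (prod f S) n = 0"
  using assms
proof (induct S arbitrary: n rule: finite_induct)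
  case empty then show ?case by simp
next
  case (insert x F)
  show ?case
    unfolding prod.insert[OF insert(1,2)]
    by (rule deg_mult[of 1 _ "card F"]) (use insert in auto)
qed

lemma Gx_inv: "Gx x * (1 - fps_const x * fps_X) = 1"
proof (rule fps_ext)
  fix n
  have e: "Gx x * (1 - fps_const x * fps_X) = Gx x - fps_X * (fps_const x * Gx x)"
    by (simp add: algebra_simps)
  show "fps_nth (Gx x * (1 - fps_const x * fps_X)) n = fps_nth 1 n"
    unfolding e by (cases n) (simp_all add: Gx_def)
qed

lemma genP_split: "genP d k = fps_const (c0 d) * (\<Prod>q=1..d. Gx (xx q)) * FF k"
  unfolding genP_def c0_def FF_def Gx_def
  by (simp add: prod.distrib fps_const_prod)

lemma genP_Q:
  assumes "p \<in> {1..d}"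
  shows "genP d k * Qp d p = fps_const (c0 d) * Gx (xx p) * FF k"
proof -
  have "(\<Prod>q=1..d. Gx (xx q)) = Gx (xx p) * (\<Prod>q\<in>{1..d} - {p}. Gx (xx q))"
    using assms by (simp add: prod.remove)
  moreover have "(\<Prod>q\<in>{1..d} - {p}. Gx (xx q)) * Qp d p = 1"
    unfolding Qp_def prod.distrib[symmetric] Gx_inv by simp
  ultimately show ?thesis
    unfolding genP_split by (simp add: algebra_simps)
qed

lemma Qp_deg:
  assumes "p \<in> {1..d}" "d \<le> r"
  shows "fps_nth (Qp d p) r = 0"
  unfolding Qp_def
proof (rule deg_prod)
  show "card ({1..d} - {p}) < r" using assms by auto
  show "fps_nth (1 - fps_const (xx q) * fps_X) n = 0" if "1 < n" for q n
    using that by (simp add: mult.commute[of _ fps_X])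
qed simp

lemma FF_deg: "k < l \<Longrightarrow> fps_nth (FF k) l = 0"
  unfolding FF_def
  by (rule deg_prod) (auto simp: algebra_simps)

lemma Gx_F_nth:
  assumes "\<And>l. k < l \<Longrightarrow> fps_nth F l = 0"
  shows "fps_nth (Gx x * F) (k + n) = x ^ n * (\<Sum>l\<le>k. fps_nth F l * x ^ (k - l))"
proof -
  have "fps_nth (Gx x * F) (k + n) = (\<Sum>i=0..k+n. fps_nth F i * x ^ (k + n - i))"
    by (subst mult.commute) (simp add: fps_mult_nth Gx_def)
  also have "\<dots> = (\<Sum>i\<le>k. fps_nth F i * x ^ (k + n - i))"
    by (rule sum.mono_neutral_right) (use assms in auto)
  also have "\<dots> = (\<Sum>i\<le>k. x ^ n * (fps_nth F i * x ^ (k - i)))"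
    by (intro sum.cong refl) (auto simp: power_add[symmetric] algebra_simps Nat.add_diff_assoc2)
  finally show ?thesis by (simp add: sum_distrib_left)
qed


lemma FF_fac: "1 + (fps_X + fps_const bet) * fps_const b = fps_const (1 + bet * b) + fps_X * (fps_const b :: ser fps)"
  by (simp add: algebra_simps fps_const_add[symmetric])

lemma FF_Suc: "FF (Suc k) = FF k * (fps_const (1 + bet * bb (Suc k)) + fps_X * fps_const (bb (Suc k)))"
  unfolding FF_def FF_fac[symmetric] by simp

lemma fpow_Suc: "fpow x (Suc k) = fpow x k * (x + bb (Suc k) + bet * x * bb (Suc k))"
  unfolding fpow_def oplus_def by simp

lemma FF_eval: "(\<Sum>l\<le>k. fps_nth (FF k) l * x ^ (k - l)) = fpow x k"
proof (induct k)
  case 0 then show ?case by (simp add: FF_def fpow_def)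
next
  case (Suc k)
  define b where "b = bb (Suc k)"
  define F where "F = FF k"
  have nth: "fps_nth (FF (Suc k)) l = (1 + bet * b) * fps_nth F l + b * (if l = 0 then 0 else fps_nth F (l - 1))" for l
    unfolding FF_Suc b_def F_def by (simp add: algebra_simps)
  have Fz: "fps_nth F (Suc k) = 0" unfolding F_def by (rule FF_deg) simp
  have "(\<Sum>l\<le>Suc k. fps_nth (FF (Suc k)) l * x ^ (Suc k - l))
      = (1 + bet * b) * (\<Sum>l\<le>Suc k. fps_nth F l * x ^ (Suc k - l))
        + b * (\<Sum>l\<le>Suc k. (if l = 0 then 0 else fps_nth F (l - 1)) * x ^ (Suc k - l))"
    by (simp only: nth distrib_right sum.distrib sum_distrib_left mult.assoc)
  also have "(\<Sum>l\<le>Suc k. fps_nth F l * x ^ (Suc k - l)) = x * (\<Sum>l\<le>k. fps_nth F l * x ^ (k - l))"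
    by (simp add: Fz sum_distrib_left Suc_diff_le algebra_simps)
  also have "(\<Sum>l\<le>Suc k. (if l = 0 then 0 else fps_nth F (l - 1)) * x ^ (Suc k - l)) = (\<Sum>l\<le>k. fps_nth F l * x ^ (k - l))"
    by (subst sum.atMost_Suc_shift) simp
  finally show ?case
    using Suc unfolding F_def b_def fpow_Suc by (simp add: algebra_simps)
qed

lemma ordP_mono: "ordP K P \<Longrightarrow> K \<le> K' \<Longrightarrow> ordP K' P"
  unfolding ordP_def by (meson diff_left_mono ordI_mono)

lemma ordP_mult: "ordP K1 P \<Longrightarrow> ordP K2 Q \<Longrightarrow> ordP (K1 + K2) (P * (Q :: 'a::comm_ring_1 fps fps))"
  unfolding ordP_def fps_mult_nth
proof (intro allI ordI_sum)
  fix n :: nat and i assume P: "\<forall>n. ordI (int n - K1) (fps_nth P n)" and Q: "\<forall>n. ordI (int n - K2) (fps_nth Q n)"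
    and i: "i \<in> {0..n}"
  show "ordI (int n - (K1 + K2)) (fps_nth P i * fps_nth Q (n - i))"
    using ordI_mult[OF P[rule_format, of i] Q[rule_format, of "n - i"]] i by (simp add: of_nat_diff algebra_simps)
qed

lemma ordP_one: "ordP 0 (1 :: 'a::comm_ring_1 fps fps)"
  unfolding ordP_def by (auto intro: ordI_le0 simp: fps_one_nth)

lemma ordP_const: "ordP 0 (fps_const (c :: 'a::comm_ring_1 fps))"
  unfolding ordP_def by (auto intro: ordI_le0)

lemma ordP_prod:
  assumes "finite S" "\<And>i. i \<in> S \<Longrightarrow> ordP K (f i)" "0 \<le> K"
  shows "ordP (int (card S) * K) (prod f S :: 'a::comm_ring_1 fps fps)"
  using assms
proof (induct S rule: finite_induct)
  case empty then show ?case by (simp add: ordP_one)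
next
  case (insert x F)
  then show ?case
    using ordP_mult[of K "f x" "int (card F) * K" "prod f F"] by (simp add: algebra_simps)
qed

lemma ordI_xx: "ordI 1 (xx i)"
  unfolding ordI_def xx_def by simp

lemma ordP_Gx: "ordI 1 y \<Longrightarrow> ordP 0 (Gx y)"
  unfolding ordP_def Gx_def using ordI_power[of 1 y] by simp

lemma ordP_genP: "ordP (int k) (genP d k)"
proof -
  have a: "ordP 0 (\<Prod>i=1..d. fps_const (1 + bet * xx i) * Gx (xx i))"
    using ordP_prod[of "{1..d}" 0 "\<lambda>i. fps_const (1 + bet * xx i) * Gx (xx i)"]
      ordP_mult[OF ordP_const ordP_Gx[OF ordI_xx]] by simp
  have b: "ordP (int k) (FF k)"
    unfolding FF_def
  proof -
    have "ordP (int (card {1..k}) * 1) (\<Prod>j=1..k. 1 + (fps_X + fps_const bet) * fps_const (bb j))"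
    proof (rule ordP_prod)
      fix j
      show "ordP 1 (1 + (fps_X + fps_const bet) * fps_const (bb j))"
        unfolding ordP_def
      proof
        fix n
        show "ordI (int n - 1) (fps_nth (1 + (fps_X + fps_const bet) * fps_const (bb j)) n)"
          by (cases "n \<le> 1") (auto intro: ordI_le0 simp: algebra_simps)
      qed
    qed auto
    then show "ordP (int k) (\<Prod>j=1..k. 1 + (fps_X + fps_const bet) * fps_const (bb j))" by simp
  qed
  show ?thesis
    using ordP_mult[OF a b] unfolding genP_def Gx_def FF_def by simp
qed


lemma PQ_sum:
  assumes "\<And>r. d \<le> r \<Longrightarrow> fps_nth Q r = 0"
  shows "(\<Sum>c<d. coeffU P (int K - int (d - 1 - c)) * fps_nth Q (d - 1 - c)) = fps_nth (P * Q) K"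
proof -
  have "(\<Sum>c<d. coeffU P (int K - int (d - 1 - c)) * fps_nth Q (d - 1 - c))
      = (\<Sum>c<d. coeffU P (int K - int (d - Suc c)) * fps_nth Q (d - Suc c))" by simp
  also have "\<dots> = (\<Sum>r<d. coeffU P (int K - int r) * fps_nth Q r)"
    by (rule sum.nat_diff_reindex)
  also have "\<dots> = (\<Sum>r<d + K + 1. coeffU P (int K - int r) * fps_nth Q r)"
    by (rule sum.mono_neutral_left) (use assms in auto)
  also have "\<dots> = (\<Sum>r<K + 1. coeffU P (int K - int r) * fps_nth Q r)"
    by (rule sum.mono_neutral_right) (auto simp: coeffU_def)
  also have "\<dots> = (\<Sum>r=0..K. fps_nth Q r * fps_nth P (K - r))"
  proof (rule sum.cong)
    show "{..<K + 1} = {0..K}" by auto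
  next
    fix r assume "r \<in> {0..K}"
    then have e: "int K - int r = int (K - r)" by simp
    show "coeffU P (int K - int r) * fps_nth Q r = fps_nth Q r * fps_nth P (K - r)"
      unfolding e coeffU_def by (simp only: nat_int mult.commute) simp
  qed
  also have "\<dots> = fps_nth (P * Q) K"
    by (subst mult.commute) (simp add: fps_mult_nth)
  finally show ?thesis .
qed

lemma cvg_pow: "ordI 1 y \<Longrightarrow> cvg 0 (\<lambda>n. c n * (y :: ser) ^ n)"
  unfolding cvg_def using ordI_power[of 1 y] by (auto intro: ordI_mult0)

lemma geom_inv:
  assumes y: "ordI 1 y"
  shows "(1 + y) ^ m * suminf (\<lambda>n. of_int (gbin (- int m) n) * (y :: ser) ^ n) = 1"
proof -
  have "(1 + y) ^ m = (\<Sum>n\<le>m. of_nat (m choose n) * y ^ n)"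
    by (subst add.commute) (simp add: binomial_ring)
  also have "\<dots> = (\<Sum>n<m + 1. of_int (gbin (int m) n) * y ^ n)"
    by (intro sum.cong) (auto simp: gbin_def)
  also have "\<dots> = suminf (\<lambda>n. of_int (gbin (int m) n) * y ^ n)"
    by (rule suminf_finite'[symmetric]) (simp add: gbin_def)
  finally have e: "(1 + y) ^ m = suminf (\<lambda>n. of_int (gbin (int m) n) * y ^ n)" .
  have "(1 + y) ^ m * suminf (\<lambda>n. of_int (gbin (- int m) n) * y ^ n)
     = suminf (\<lambda>n. \<Sum>s\<le>n. of_int (gbin (int m) s) * y ^ s * (of_int (gbin (- int m) (n - s)) * y ^ (n - s)))"
    unfolding e by (rule suminf_cauchy[OF cvg_pow[OF y] cvg_pow[OF y]])
  also have "\<dots> = suminf (\<lambda>n. of_int (gbin (int m + - int m) n) * y ^ n)"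
  proof (intro arg_cong[where f=suminf] ext)
    fix n
    have "(\<Sum>s\<le>n. of_int (gbin (int m) s) * y ^ s * (of_int (gbin (- int m) (n - s)) * y ^ (n - s)))
        = (\<Sum>s\<le>n. of_int (gbin (int m) s * gbin (- int m) (n - s)) * y ^ n)"
      by (intro sum.cong refl) (auto simp: power_add[symmetric] algebra_simps)
    also have "\<dots> = of_int (\<Sum>s\<le>n. gbin (int m) s * gbin (- int m) (n - s)) * y ^ n"
      by (simp add: sum_distrib_right)
    also have "\<dots> = of_int (gbin (int m + - int m) n) * y ^ n"
      by (simp only: gbin_conv)
    finally show "(\<Sum>s\<le>n. of_int (gbin (int m) s) * y ^ s * (of_int (gbin (- int m) (n - s)) * y ^ (n - s)))
        = of_int (gbin (int m + - int m) n) * y ^ n" .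
  qed
  also have "\<dots> = (\<Sum>n<1. of_int (gbin 0 n) * y ^ n)"
    by (subst suminf_finite'[of 1]) (auto simp: gbin_zero)
  also have "\<dots> = 1" by simp
  finally show ?thesis .
qed


lemma PQ_nth:
  assumes p: "p \<in> {1..d}"
  shows "fps_nth (genP d k * Qp d p) (k + n) = c0 d * (xx p ^ n * fpow (xx p) k)"
proof -
  have "fps_nth (genP d k * Qp d p) (k + n) = c0 d * fps_nth (Gx (xx p) * FF k) (k + n)"
    unfolding genP_Q[OF p] mult.assoc by simp
  also have "fps_nth (Gx (xx p) * FF k) (k + n) = xx p ^ n * fpow (xx p) k"
    using Gx_F_nth[of k "FF k" "xx p" n] FF_deg FF_eval by simp
  finally show ?thesis .
qed

lemma row_main:
  assumes p: "p \<in> {1..d}"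
  shows "(\<Sum>c<d. TT (genP d k) a (int k - int (d - 1 - c)) * (w * fps_nth (Qp d p) (d - 1 - c)))
       = w * c0 d * fpow (xx p) k * suminf (\<lambda>n. of_int (gbin a n) * (bet * xx p) ^ n)"
proof -
  define P where "P = genP d k"
  define Q where "Q = Qp d p"
  define x where "x = xx p"
  define N where "N c = int k - int (d - 1 - c)" for c
  define f where "f c n = of_int (gbin a n) * bet ^ n * coeffU P (N c + int n) * (w * fps_nth Q (d - 1 - c))" for c n
  have P: "ordP (int k) P" unfolding P_def by (rule ordP_genP)
  have cv: "cvg (int d) (f c)" for c
    unfolding f_def
    by (rule cvg_mult_right, rule cvg_mono[OF cvg_T[OF P]]) (simp add: N_def)
  have "(\<Sum>c<d. TT P a (N c) * (w * fps_nth Q (d - 1 - c))) = (\<Sum>c<d. suminf (f c))"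
    unfolding TT_def f_def by (intro sum.cong refl suminf_mult_right[OF cvg_T[OF P]])
  also have "\<dots> = suminf (\<lambda>n. \<Sum>c<d. f c n)"
    by (rule suminf_sum[symmetric]) (use cv in auto)
  also have "\<dots> = suminf (\<lambda>n. of_int (gbin a n) * (bet * x) ^ n * (w * c0 d * fpow x k))"
  proof (intro arg_cong[where f=suminf] ext)
    fix n
    have "(\<Sum>c<d. f c n) = of_int (gbin a n) * bet ^ n * w *
            (\<Sum>c<d. coeffU P (int (k + n) - int (d - 1 - c)) * fps_nth Q (d - 1 - c))"
      unfolding f_def N_def by (simp add: sum_distrib_left algebra_simps)
    also have "\<dots> = of_int (gbin a n) * bet ^ n * w * fps_nth (P * Q) (k + n)"
      by (subst PQ_sum) (use Qp_deg[OF p] in \<open>auto simp: Q_def\<close>)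
    also have "\<dots> = of_int (gbin a n) * (bet * x) ^ n * (w * c0 d * fpow x k)"
      unfolding P_def Q_def x_def PQ_nth[OF p] by (simp add: power_mult_distrib algebra_simps)
    finally show "(\<Sum>c<d. f c n) = of_int (gbin a n) * (bet * x) ^ n * (w * c0 d * fpow x k)" .
  qed
  also have "\<dots> = suminf (\<lambda>n. of_int (gbin a n) * (bet * x) ^ n) * (w * c0 d * fpow x k)"
    by (rule suminf_mult_right[OF cvg_pow, symmetric]) (simp add: x_def ordI_mult0 ordI_xx)
  finally show ?thesis unfolding P_def Q_def x_def N_def by (simp add: algebra_simps)
qed


section \<open>Vandermonde\<close>

lemma mat_mult_entry:
  assumes "r < n" "p < m"
  shows "(mat n k f * mat k m g) $$ (r, p) = (\<Sum>c<k. f (r, c) * g (c, p))"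
  using assms by (simp add: scalar_prod_def atLeast0LessThan)

lemma vdm_det:
  fixes y :: "nat \<Rightarrow> 'a::comm_ring_1"
  shows "det (mat n n (\<lambda>(r, p). y p ^ (n - 1 - r))) = (\<Prod>q<n. \<Prod>p<q. y p - y q)"
proof (induct n)
  case 0 then show ?case by (simp add: det_def)
next
  case (Suc n)
  define V where "V = mat (Suc n) (Suc n) (\<lambda>(r, p). y p ^ (Suc n - 1 - r))"
  define L where "L = mat (Suc n) (Suc n) (\<lambda>(r, c). if c = r then 1 else if c = Suc r then - y n else (0::'a))"
  define B where "B = mat n n (\<lambda>(r, p). y p ^ (n - 1 - r) * (y p - y n))"
  define Vn where "Vn = mat n n (\<lambda>(r, p). y p ^ (n - 1 - r))"
  define Dg where "Dg = mat n n (\<lambda>(r, c). if r = c then y r - y n else (0::'a))"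
  have L: "L \<in> carrier_mat (Suc n) (Suc n)" and V: "V \<in> carrier_mat (Suc n) (Suc n)"
    by (auto simp: L_def V_def)
  have detL: "det L = 1"
  proof -
    have "det L = prod_list (diag_mat L)"
      by (rule det_upper_triangular[OF _ L]) (auto simp: L_def upper_triangular_def)
    also have "\<dots> = 1" by (simp add: prod_list_diag_prod L_def)
    finally show ?thesis .
  qed
  have sumL: "(\<Sum>c<Suc n. (if c = r then 1 else if c = Suc r then - y n else 0) * v c)
      = v r - (if r < n then y n * v (Suc r) else 0)" if "r < Suc n" for r and v :: "nat \<Rightarrow> 'a"
  proof -
    have "(\<Sum>c<Suc n. (if c = r then 1 else if c = Suc r then - y n else 0) * v c)
        = (\<Sum>c<Suc n. (if c = r then v c else 0)) + (\<Sum>c<Suc n. (if c = Suc r then - y n * v c else 0))"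
      by (subst sum.distrib[symmetric]) (intro sum.cong refl, auto)
    also have "\<dots> = v r - (if r < n then y n * v (Suc r) else 0)"
      using that by (auto simp: sum.delta' less_Suc_eq)
    finally show ?thesis .
  qed
  have LV: "L * V = four_block_mat B (0\<^sub>m n 1) (mat 1 n (\<lambda>_. 1)) (mat 1 1 (\<lambda>_. 1))"
  proof (rule eq_matI)
    fix r p assume r: "r < dim_row (four_block_mat B (0\<^sub>m n 1) (mat 1 n (\<lambda>_. 1)) (mat 1 1 (\<lambda>_. 1)))"
      and p: "p < dim_col (four_block_mat B (0\<^sub>m n 1) (mat 1 n (\<lambda>_. 1)) (mat 1 1 (\<lambda>_. 1)))"
    then have r': "r < Suc n" and p': "p < Suc n" by (simp_all add: B_def)
    have "(L * V) $$ (r, p) = y p ^ (n - r) - (if r < n then y n * y p ^ (n - Suc r) else 0)"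
      unfolding L_def V_def mat_mult_entry[OF r' p'] using sumL[OF r', of "\<lambda>c. y p ^ (Suc n - 1 - c)"]
      by simp
    also have "\<dots> = four_block_mat B (0\<^sub>m n 1) (mat 1 n (\<lambda>_. 1)) (mat 1 1 (\<lambda>_. 1)) $$ (r, p)"
    proof (cases "r < n")
      case True
      then have e: "y p ^ (n - r) = y p * y p ^ (n - 1 - r)" "n - Suc r = n - 1 - r"
        by (auto simp: power_Suc[symmetric] Suc_diff_Suc)
      show ?thesis
      proof (cases "p < n")
        case True2: True
        then show ?thesis using True r' p' unfolding e by (auto simp: B_def algebra_simps)
      next
        case False
        then have "p = n" using p' by simp
        then show ?thesis using True r' p' unfolding e by (auto simp: B_def algebra_simps)
      qed
    next
      case False
      then show ?thesis using r' p' by (auto simp: B_def)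
    qed
    finally show "(L * V) $$ (r, p) = four_block_mat B (0\<^sub>m n 1) (mat 1 n (\<lambda>_. 1)) (mat 1 1 (\<lambda>_. 1)) $$ (r, p)" .
  qed (auto simp: L_def V_def B_def)
  have detD: "det Dg = (\<Prod>p<n. y p - y n)"
  proof -
    have "det Dg = prod_list (diag_mat Dg)"
      by (rule det_upper_triangular) (auto simp: Dg_def upper_triangular_def)
    also have "\<dots> = (\<Prod>p<n. y p - y n)" by (simp add: prod_list_diag_prod Dg_def atLeast0LessThan)
    finally show ?thesis .
  qed
  have BVD: "B = Vn * Dg"
  proof (rule eq_matI)
    fix r p assume "r < dim_row (Vn * Dg)" "p < dim_col (Vn * Dg)"
    then have r: "r < n" and p: "p < n" by (auto simp: Vn_def Dg_def)
    have "(Vn * Dg) $$ (r, p) = (\<Sum>c<n. (if c = p then y c ^ (n - 1 - r) * (y c - y n) else 0))"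
      unfolding Vn_def Dg_def mat_mult_entry[OF r p] by (intro sum.cong refl) auto
    also have "\<dots> = B $$ (r, p)" using r p by (simp add: B_def)
    finally show "B $$ (r, p) = (Vn * Dg) $$ (r, p)" ..
  qed (auto simp: B_def Vn_def Dg_def)
  have "det V = det (L * V)" using det_mult[OF L V] detL by simp
  also have "\<dots> = det B * det (mat 1 1 (\<lambda>_. 1 :: 'a))"
    unfolding LV by (rule det_four_block_mat_upper_right_zero_col) (auto simp: B_def)
  also have "det (mat 1 1 (\<lambda>_. 1 :: 'a)) = 1" by (simp add: det_single)
  also have "det B = det Vn * det Dg"
    unfolding BVD by (rule det_mult) (auto simp: Vn_def Dg_def)
  also have "det Vn = (\<Prod>q<n. \<Prod>p<q. y p - y q)" using Suc by (simp add: Vn_def)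
  finally show ?case by (simp add: V_def detD)
qed


lemma vdm_eq: "vdm d = (\<Prod>q<d. \<Prod>p<q. xx (Suc p) - xx (Suc q))"
proof -
  have "(\<Prod>q<d. \<Prod>p<q. xx (Suc p) - xx (Suc q)) = (\<Prod>(q, p)\<in>Sigma {..<d} (\<lambda>q. {..<q}). xx (Suc p) - xx (Suc q))"
    by (rule prod.Sigma) auto
  also have "\<dots> = vdm d"
    unfolding vdm_def
    by (rule prod.reindex_bij_witness[where j="\<lambda>(q, p). (Suc p, Suc q)" and i="\<lambda>(i, j). (j - 1, i - 1)"]) auto
  finally show ?thesis ..
qed

lemma xx_nth1: "fps_nth (xx i) 1 = Poly_Mapping.single (Poly_Mapping.single (XV i) 1) 1"
  by (simp add: xx_def indet_def)

lemma xx_diff_nz: "i \<noteq> j \<Longrightarrow> xx i - xx j \<noteq> 0"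
proof
  assume ij: "i \<noteq> j" and z: "xx i - xx j = 0"
  have ne: "Poly_Mapping.single (XV i) (1::nat) \<noteq> Poly_Mapping.single (XV j) 1"
  proof
    assume "Poly_Mapping.single (XV i) (1::nat) = Poly_Mapping.single (XV j) 1"
    then have "Poly_Mapping.lookup (Poly_Mapping.single (XV i) (1::nat)) (XV i) = Poly_Mapping.lookup (Poly_Mapping.single (XV j) 1) (XV i)" by simp
    then show False using ij by (simp add: lookup_single_not_eq)
  qed
  have "fps_nth (xx i - xx j) 1 = 0" using z by simp
  then have "Poly_Mapping.lookup (fps_nth (xx i - xx j) 1) (Poly_Mapping.single (XV i) 1) = 0" by simp
  then show False using ne unfolding fps_sub_nth xx_nth1 by (simp add: lookup_minus lookup_single_not_eq)
qed

lemma vdm_nz: "vdm d \<noteq> 0"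
  unfolding vdm_def
proof (subst prod_zero_iff)
  show "finite {(i, j). 1 \<le> i \<and> i < j \<and> j \<le> d}"
    by (rule finite_subset[of _ "{..d} \<times> {..d}"]) auto
  show "\<not> (\<exists>a\<in>{(i, j). 1 \<le> i \<and> i < j \<and> j \<le> d}. (case a of (i, j) \<Rightarrow> xx i - xx j) = 0)"
    using xx_diff_nz by auto
qed

lemma c0_nth0: "fps_nth (c0 d) 0 = 1"
  unfolding c0_def nth0_prod by (simp add: xx_def)

lemma c0_nz: "c0 d \<noteq> 0"
  using c0_nth0[of d] by (metis fps_zero_nth zero_neq_one)

lemma c0_lessThan: "c0 d = (\<Prod>p<d. 1 + bet * xx (Suc p))"
  unfolding c0_def by (simp add: prod.atLeast1_atMost_eq)

section \<open>Evaluation at u = -beta\<close>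

definition ev :: "ser fps \<Rightarrow> ser" where "ev P = suminf (\<lambda>s. (- bet) ^ s * fps_nth P s)"

lemma cvg_ev: "ordP K P \<Longrightarrow> cvg K (\<lambda>s. (- bet) ^ s * fps_nth P s)"
  unfolding cvg_def ordP_def by (auto intro: ordI_mult0)

lemma ev_mult:
  assumes "ordP K1 P" "ordP K2 Q"
  shows "ev (P * Q) = ev P * ev Q"
proof -
  have "ev P * ev Q = suminf (\<lambda>n. \<Sum>s\<le>n. (- bet) ^ s * fps_nth P s * ((- bet) ^ (n - s) * fps_nth Q (n - s)))"
    unfolding ev_def by (rule suminf_cauchy[OF cvg_ev[OF assms(1)] cvg_ev[OF assms(2)]])
  also have "\<dots> = ev (P * Q)"
    unfolding ev_def fps_mult_nth
  proof (intro arg_cong[where f=suminf] ext)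
    fix n
    show "(\<Sum>s\<le>n. (- bet) ^ s * fps_nth P s * ((- bet) ^ (n - s) * fps_nth Q (n - s))) =
          (- bet) ^ n * (\<Sum>i = 0..n. fps_nth P i * fps_nth Q (n - i))"
      unfolding sum_distrib_left atLeast0AtMost
      by (intro sum.cong refl) (auto simp: power_add[symmetric] algebra_simps)
  qed
  finally show ?thesis ..
qed

lemma ev_prod:
  assumes "finite S" "\<And>i. i \<in> S \<Longrightarrow> ordP K (f i)" "0 \<le> K"
  shows "ev (prod f S) = (\<Prod>i\<in>S. ev (f i))"
  using assms
proof (induct S rule: finite_induct)
  case empty
  have "ev 1 = (\<Sum>s<1. (- bet) ^ s * fps_nth (1::ser fps) s)"
    unfolding ev_def by (rule suminf_finite') simp
  then show ?case by simp
next
  case (insert x F)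
  have "ev (prod f (insert x F)) = ev (f x * prod f F)" using insert by simp
  also have "\<dots> = ev (f x) * ev (prod f F)"
    by (rule ev_mult[of K _ "int (card F) * K"]) (use insert in \<open>auto intro!: ordP_prod\<close>)
  finally show ?case using insert by simp
qed

lemma ev_Gx:
  "ev (fps_const (1 + bet * xx q) * Gx (xx q)) = 1"
proof -
  have "ev (fps_const (1 + bet * xx q) * Gx (xx q))
      = (1 + bet * xx q) * suminf (\<lambda>s. of_int (gbin (- int 1) s) * (bet * xx q) ^ s)"
    unfolding ev_def Gx_def
  proof (subst suminf_mult_left[OF cvg_pow])
    show "ordI 1 (bet * xx q)" by (rule ordI_mult0[OF ordI_xx])
    show "suminf (\<lambda>s. (- bet) ^ s * fps_nth (fps_const (1 + bet * xx q) * Abs_fps ((^) (xx q))) s) =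
      suminf (\<lambda>s. (1 + bet * xx q) * (of_int (gbin (- int 1) s) * (bet * xx q) ^ s))"
    proof (intro arg_cong[where f=suminf] ext)
      fix s
      have e1: "(- bet) ^ s = (-1) ^ s * bet ^ s" by (rule power_minus)
      have e2: "of_int (gbin (- int 1) s) = ((-1) ^ s :: ser)" by (simp add: gbin_m1)
      show "(- bet) ^ s * fps_nth (fps_const (1 + bet * xx q) * Abs_fps ((^) (xx q))) s =
        (1 + bet * xx q) * (of_int (gbin (- int 1) s) * (bet * xx q) ^ s)"
        unfolding e1 e2 fps_mult_left_const_nth fps_nth_Abs_fps power_mult_distrib by (simp only: mult_ac)
    qed
  qed
  also have "\<dots> = 1" using geom_inv[of "bet * xx q" 1] ordI_mult0[OF ordI_xx] by simp
  finally show ?thesis .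
qed

lemma ev_lin: "ev (1 + (fps_X + fps_const bet) * fps_const b) = 1"
proof -
  have "ev (1 + (fps_X + fps_const bet) * fps_const b) = (\<Sum>s<2. (- bet) ^ s * fps_nth (1 + (fps_X + fps_const bet) * fps_const b) s)"
    unfolding ev_def by (rule suminf_finite') (simp add: algebra_simps)
  also have "\<dots> = 1" by (simp add: numeral_2_eq_2 algebra_simps)
  finally show ?thesis .
qed

lemma Gmk_0: "Gmk d k 0 = 1"
proof -
  have a: "ordP 0 (fps_const (1 + bet * xx i) * Gx (xx i))" for i
    using ordP_mult[OF ordP_const ordP_Gx[OF ordI_xx]] by simp
  have b: "ordP 1 (1 + (fps_X + fps_const bet) * fps_const (bb j))" for j
    unfolding ordP_def
  proof
    fix n
    show "ordI (int n - 1) (fps_nth (1 + (fps_X + fps_const bet) * fps_const (bb j)) n)"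
      by (cases "n \<le> 1") (auto intro: ordI_le0 simp: algebra_simps)
  qed
  have pa: "ordP (int (card {1..d}) * 0) (\<Prod>i=1..d. fps_const (1 + bet * xx i) * Gx (xx i))"
    by (rule ordP_prod) (auto intro: a)
  have pb: "ordP (int (card {1..k}) * 1) (\<Prod>j=1..k. 1 + (fps_X + fps_const bet) * fps_const (bb j))"
    by (rule ordP_prod) (auto intro: b)
  have "Gmk d k 0 = ev (genP d k)"
    unfolding Gmk_def ev_def coeffU_def by simp
  also have "\<dots> = ev (\<Prod>i=1..d. fps_const (1 + bet * xx i) * Gx (xx i)) * ev (\<Prod>j=1..k. 1 + (fps_X + fps_const bet) * fps_const (bb j))"
    unfolding genP_def Gx_def[symmetric] by (rule ev_mult[OF pa pb])
  also have "ev (\<Prod>i=1..d. fps_const (1 + bet * xx i) * Gx (xx i)) = 1"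
    by (subst ev_prod[of _ 0]) (auto intro: a simp: ev_Gx)
  also have "ev (\<Prod>j=1..k. 1 + (fps_X + fps_const bet) * fps_const (bb j)) = 1"
    by (subst ev_prod[of _ 1]) (auto intro: b simp: ev_lin)
  finally show ?thesis by simp
qed


lemma mult_entry:
  assumes "A \<in> carrier_mat n k" "B \<in> carrier_mat k m" "r < n" "p < m"
  shows "(A * B) $$ (r, p) = (\<Sum>c<k. A $$ (r, c) * B $$ (c, p))"
  using assms by (simp add: scalar_prod_def atLeast0LessThan)

definition M1 :: "nat \<Rightarrow> (nat \<Rightarrow> nat) \<Rightarrow> ser mat" where
  "M1 d lam = mat d d (\<lambda>(r,c). let i = r+1; j = c+1 in
              suminf (\<lambda>s. of_int (gbin (int i - int d) s) * bet ^ s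
                     * Gmk d (lam i + d - i) (int (lam i) + int j - int i + int s)))"

definition M2 :: "nat \<Rightarrow> (nat \<Rightarrow> nat) \<Rightarrow> ser mat" where
  "M2 d lam = mat d d (\<lambda>(r,c). let i = r+1; j = c+1 in
              suminf (\<lambda>s. of_int (gbin (int i - int j) s) * bet ^ s
                     * Gmk d (lam i + d - i) (int (lam i) + int j - int i + int s)))"

definition Amat :: "nat \<Rightarrow> ser mat" where
  "Amat d = mat d d (\<lambda>(c, p). (1 + bet * xx (Suc p)) ^ d * fps_nth (Qp d (Suc p)) (d - 1 - c))"

definition Hmat :: "nat \<Rightarrow> ser mat" where
  "Hmat d = mat d d (\<lambda>(r, c). coeffU (genP d 0) (int c - int r))"

definition Gm :: "nat \<Rightarrow> (nat \<Rightarrow> nat) \<Rightarrow> ser mat" where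
  "Gm d lam = mat d d (\<lambda>(r,c). fpow (xx (c+1)) (lam (r+1) + d - (r+1)) * (1 + bet * xx (c+1)) ^ r)"

definition Vd :: "nat \<Rightarrow> ser mat" where
  "Vd d = mat d d (\<lambda>(r, p). xx (Suc p) ^ (d - 1 - r))"

definition Dw :: "nat \<Rightarrow> ser mat" where
  "Dw d = mat d d (\<lambda>(r, c). if r = c then (1 + bet * xx (Suc r)) ^ d else 0)"

lemma carr: "M1 d lam \<in> carrier_mat d d" "M2 d lam \<in> carrier_mat d d" "Amat d \<in> carrier_mat d d"
  "Hmat d \<in> carrier_mat d d" "Gm d lam \<in> carrier_mat d d" "Vd d \<in> carrier_mat d d" "Dw d \<in> carrier_mat d d"
  by (auto simp: M1_def M2_def Amat_def Hmat_def Gm_def Vd_def Dw_def)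

lemma gen_entry:
  assumes r: "r < d" and c: "c < d"
  shows "suminf (\<lambda>s. of_int (gbin a s) * bet ^ s
                     * Gmk d (lam (r+1) + d - (r+1)) (int (lam (r+1)) + int (c+1) - int (r+1) + int s))
       = TT (genP d (lam (r+1) + d - (r+1))) (a - 1) (int (lam (r+1) + d - (r+1)) - int (d - 1 - c))"
proof -
  have e: "int (lam (r+1)) + int (c+1) - int (r+1) = int (lam (r+1) + d - (r+1)) - int (d - 1 - c)"
    using r c by (simp add: of_nat_diff)
  show ?thesis
    unfolding Gmk_T TT_conv[OF ordP_genP] e[symmetric] by simp
qed

lemma M1_entry:
  assumes r: "r < d" and c: "c < d"
  shows "M1 d lam $$ (r, c) = TT (genP d (lam (r+1) + d - (r+1))) (int (r+1) - int d - 1) (int (lam (r+1) + d - (r+1)) - int (d - 1 - c))"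
  using r c gen_entry[OF r c, of "int (r+1) - int d" lam] by (simp add: M1_def Let_def)

lemma M2_entry:
  assumes r: "r < d" and c: "c < d"
  shows "M2 d lam $$ (r, c) = TT (genP d (lam (r+1) + d - (r+1))) (int (r+1) - int (c+1) - 1) (int (lam (r+1) + d - (r+1)) - int (d - 1 - c))"
  using r c gen_entry[OF r c, of "int (r+1) - int (c+1)" lam] by (simp add: M2_def Let_def)

lemma M1A: "M1 d lam * Amat d = c0 d \<cdot>\<^sub>m Gm d lam"
proof (rule eq_matI)
  fix r p assume "r < dim_row (c0 d \<cdot>\<^sub>m Gm d lam)" "p < dim_col (c0 d \<cdot>\<^sub>m Gm d lam)"
  then have r: "r < d" and p: "p < d" by (auto simp: Gm_def)
  define k where "k = lam (r+1) + d - (r+1)"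
  define x where "x = xx (Suc p)"
  have pp: "Suc p \<in> {1..d}" using p by auto
  have "(M1 d lam * Amat d) $$ (r, p) = (\<Sum>c<d. M1 d lam $$ (r, c) * Amat d $$ (c, p))"
    by (rule mult_entry[OF carr(1) carr(3) r p])
  also have "\<dots> = (\<Sum>c<d. TT (genP d k) (int (r+1) - int d - 1) (int k - int (d - 1 - c)) * ((1 + bet * x) ^ d * fps_nth (Qp d (Suc p)) (d - 1 - c)))"
    by (intro sum.cong refl) (simp add: M1_entry r k_def Amat_def p x_def)
  also have "\<dots> = (1 + bet * x) ^ d * c0 d * fpow x k * suminf (\<lambda>n. of_int (gbin (int (r+1) - int d - 1) n) * (bet * x) ^ n)"
    unfolding x_def by (rule row_main[OF pp])
  also have "int (r+1) - int d - 1 = - int (d - r)" using r by simp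
  also have "(1 + bet * x) ^ d = (1 + bet * x) ^ r * (1 + bet * x) ^ (d - r)"
    using r by (simp add: power_add[symmetric])
  also have "(1 + bet * x) ^ r * (1 + bet * x) ^ (d - r) * c0 d * fpow x k * suminf (\<lambda>n. of_int (gbin (- int (d - r)) n) * (bet * x) ^ n)
      = c0 d * (fpow x k * (1 + bet * x) ^ r) * ((1 + bet * x) ^ (d - r) * suminf (\<lambda>n. of_int (gbin (- int (d - r)) n) * (bet * x) ^ n))"
    by (simp only: mult_ac)
  also have "(1 + bet * x) ^ (d - r) * suminf (\<lambda>n. of_int (gbin (- int (d - r)) n) * (bet * x) ^ n) = 1"
    by (rule geom_inv) (simp add: x_def ordI_mult0 ordI_xx)
  finally show "(M1 d lam * Amat d) $$ (r, p) = (c0 d \<cdot>\<^sub>m Gm d lam) $$ (r, p)"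
    using r p by (simp add: Gm_def k_def x_def)
qed (auto simp: M1_def Amat_def Gm_def)

lemma HA: "Hmat d * Amat d = c0 d \<cdot>\<^sub>m (Vd d * Dw d)"
proof (rule eq_matI)
  fix r p assume "r < dim_row (c0 d \<cdot>\<^sub>m (Vd d * Dw d))" "p < dim_col (c0 d \<cdot>\<^sub>m (Vd d * Dw d))"
  then have r: "r < d" and p: "p < d" by (auto simp: Vd_def Dw_def)
  define x where "x = xx (Suc p)"
  have pp: "Suc p \<in> {1..d}" using p by auto
  have "(Hmat d * Amat d) $$ (r, p) = (\<Sum>c<d. Hmat d $$ (r, c) * Amat d $$ (c, p))"
    by (rule mult_entry[OF carr(4) carr(3) r p])
  also have "\<dots> = (1 + bet * x) ^ d * (\<Sum>c<d. coeffU (genP d 0) (int (d - 1 - r) - int (d - 1 - c)) * fps_nth (Qp d (Suc p)) (d - 1 - c))"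
    unfolding sum_distrib_left
  proof (intro sum.cong refl)
    fix c assume "c \<in> {..<d}"
    then have e: "int (d - 1 - r) - int (d - 1 - c) = int c - int r" using r by (simp add: of_nat_diff)
    show "Hmat d $$ (r, c) * Amat d $$ (c, p) = (1 + bet * x) ^ d * (coeffU (genP d 0) (int (d - 1 - r) - int (d - 1 - c)) * fps_nth (Qp d (Suc p)) (d - 1 - c))"
      unfolding e using r p \<open>c \<in> {..<d}\<close> by (simp add: Hmat_def Amat_def x_def)
  qed
  also have "\<dots> = (1 + bet * x) ^ d * fps_nth (genP d 0 * Qp d (Suc p)) (d - 1 - r)"
    by (subst PQ_sum) (use Qp_deg[OF pp] in auto)
  also have "fps_nth (genP d 0 * Qp d (Suc p)) (d - 1 - r) = c0 d * x ^ (d - 1 - r)"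
    using PQ_nth[OF pp, of 0 "d - 1 - r"] by (simp add: x_def fpow_def)
  also have "(Vd d * Dw d) $$ (r, p) = x ^ (d - 1 - r) * (1 + bet * x) ^ d"
  proof -
    have "(Vd d * Dw d) $$ (r, p) = (\<Sum>c<d. Vd d $$ (r, c) * Dw d $$ (c, p))"
      by (rule mult_entry[OF carr(6) carr(7) r p])
    also have "\<dots> = (\<Sum>c<d. if c = p then xx (Suc c) ^ (d - 1 - r) * (1 + bet * xx (Suc c)) ^ d else 0)"
      by (intro sum.cong refl) (use r p in \<open>auto simp: Vd_def Dw_def\<close>)
    also have "\<dots> = x ^ (d - 1 - r) * (1 + bet * x) ^ d" using p by (simp add: x_def)
    finally show ?thesis .
  qed
  ultimately show "(Hmat d * Amat d) $$ (r, p) = (c0 d \<cdot>\<^sub>m (Vd d * Dw d)) $$ (r, p)"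
    using r p by (simp add: Vd_def Dw_def algebra_simps)
qed (auto simp: Hmat_def Amat_def Vd_def Dw_def)

lemma genP0_nth0: "fps_nth (genP d 0) 0 = c0 d"
proof -
  have "fps_nth (\<Prod>q=1..d. Gx (xx q)) 0 = 1" by (simp add: nth0_prod Gx_def)
  then show ?thesis unfolding genP_split by (simp add: FF_def)
qed

lemma det_H: "det (Hmat d) = c0 d ^ d"
proof -
  have "det (Hmat d) = prod_list (diag_mat (Hmat d))"
    by (rule det_upper_triangular[OF _ carr(4)]) (auto simp: Hmat_def upper_triangular_def coeffU_def)
  also have "\<dots> = c0 d ^ d" by (simp add: prod_list_diag_prod Hmat_def coeffU_def genP0_nth0)
  finally show ?thesis .
qed

lemma det_Dw: "det (Dw d) = c0 d ^ d"
proof -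
  have "det (Dw d) = prod_list (diag_mat (Dw d))"
    by (rule det_upper_triangular[OF _ carr(7)]) (auto simp: Dw_def upper_triangular_def)
  also have "\<dots> = (\<Prod>p<d. (1 + bet * xx (Suc p)) ^ d)"
    by (simp add: prod_list_diag_prod Dw_def atLeast0LessThan)
  also have "\<dots> = c0 d ^ d" by (simp add: c0_lessThan prod_power_distrib)
  finally show ?thesis .
qed

lemma det_Vd: "det (Vd d) = vdm d"
  using vdm_det[of d "\<lambda>p. xx (Suc p)"] by (simp add: Vd_def vdm_eq)

lemma det_A: "det (Amat d) = vdm d * c0 d ^ d"
proof -
  have "c0 d ^ d * det (Amat d) = det (Hmat d * Amat d)"
    by (simp add: det_mult[OF carr(4) carr(3)] det_H)
  also have "\<dots> = c0 d ^ d * det (Vd d * Dw d)"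
    unfolding HA by (simp add: Dw_def)
  also have "det (Vd d * Dw d) = det (Vd d) * det (Dw d)" by (rule det_mult[OF carr(6) carr(7)])
  also have "\<dots> = vdm d * c0 d ^ d" by (simp add: det_Vd det_Dw)
  finally show ?thesis using c0_nz by simp
qed

lemma main1: "Gfact d lam = det (M1 d lam)"
proof -
  have "det (M1 d lam) * det (Amat d) = det (M1 d lam * Amat d)"
    by (simp add: det_mult[OF carr(1) carr(3)])
  also have "\<dots> = c0 d ^ d * galt d lam"
    unfolding M1A by (simp add: galt_def Gm_def)
  finally have "vdm d * det (M1 d lam) * c0 d ^ d = galt d lam * c0 d ^ d"
    unfolding det_A by (simp add: algebra_simps)
  then have eq: "vdm d * det (M1 d lam) = galt d lam" using c0_nz by simp
  show ?thesis
    unfolding Gfact_def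
  proof (rule the_equality)
    show "vdm d * det (M1 d lam) = galt d lam" by (rule eq)
    fix g assume "vdm d * g = galt d lam"
    then show "g = det (M1 d lam)" by (metis eq mult_left_cancel vdm_nz)
  qed
qed


definition Tm :: "nat \<Rightarrow> ser mat" where
  "Tm d = mat d d (\<lambda>(c', c). if c \<le> c' then of_int (gbin (int d - int (c+1)) (c' - c)) * bet ^ (c' - c) else 0)"

lemma det_Tm: "det (Tm d) = 1"
proof -
  have T: "Tm d \<in> carrier_mat d d" by (simp add: Tm_def)
  have "det (Tm d) = prod_list (diag_mat (Tm d))"
    by (rule det_lower_triangular[OF _ T]) (auto simp: Tm_def)
  also have "\<dots> = 1" by (simp add: prod_list_diag_prod Tm_def)
  finally show ?thesis .
qed

lemma M1T: "M1 d lam * Tm d = M2 d lam"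
proof (rule eq_matI)
  fix r c assume "r < dim_row (M2 d lam)" "c < dim_col (M2 d lam)"
  then have r: "r < d" and c: "c < d" by (auto simp: M2_def)
  define k where "k = lam (r+1) + d - (r+1)"
  define P where "P = genP d k"
  define a where "a = int (r+1) - int d - 1"
  define N where "N c' = int k - int (d - 1 - c')" for c'
  define g where "g t = of_int (gbin (int d - int (c+1)) t) * bet ^ t * TT P a (N c + int t)" for t
  have T: "Tm d \<in> carrier_mat d d" by (simp add: Tm_def)
  have "(M1 d lam * Tm d) $$ (r, c) = (\<Sum>c'<d. M1 d lam $$ (r, c') * Tm d $$ (c', c))"
    by (rule mult_entry[OF carr(1) T r c])
  also have "\<dots> = (\<Sum>c'<d. if c \<le> c' then g (c' - c) else 0)"
  proof (intro sum.cong refl)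
    fix c' assume c': "c' \<in> {..<d}"
    show "M1 d lam $$ (r, c') * Tm d $$ (c', c) = (if c \<le> c' then g (c' - c) else 0)"
    proof (cases "c \<le> c'")
      case True
      have e: "N c + int (c' - c) = N c'" using True c' unfolding N_def by (simp add: of_nat_diff)
      have m: "M1 d lam $$ (r, c') = TT P a (N c')"
        unfolding P_def a_def k_def N_def using M1_entry[OF r, of c' lam] c' by simp
      have t: "Tm d $$ (c', c) = of_int (gbin (int d - int (c+1)) (c' - c)) * bet ^ (c' - c)"
        using True c' c by (simp add: Tm_def)
      show ?thesis unfolding m t g_def e using True by (simp add: mult.commute)
    qed (use c' c in \<open>simp add: Tm_def\<close>)
  qed
  also have "\<dots> = (\<Sum>c'\<in>{c..<d}. g (c' - c))"
    by (rule sum.mono_neutral_cong_right) auto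
  also have "\<dots> = (\<Sum>t\<in>{0..<d - c}. g t)"
    using sum.shift_bounds_nat_ivl[of "\<lambda>c'. g (c' - c)" 0 c "d - c"] c by simp
  also have "\<dots> = suminf g"
    unfolding atLeast0LessThan
  proof (rule suminf_finite'[symmetric])
    fix t assume "d - c \<le> t"
    then have "gbin (int d - int (c+1)) t = 0" using c by (intro gbin_nonneg_big) auto
    then show "g t = 0" by (simp add: g_def)
  qed
  also have "\<dots> = TT P (int d - int (c+1) + a) (N c)"
    unfolding g_def P_def by (rule TT_conv[OF ordP_genP])
  also have "\<dots> = M2 d lam $$ (r, c)"
    using r c by (simp add: M2_entry P_def a_def N_def k_def)
  finally show "(M1 d lam * Tm d) $$ (r, c) = M2 d lam $$ (r, c)" .
qed (auto simp: M1_def M2_def Tm_def)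

lemma main2: "Gfact d lam = det (M2 d lam)"
proof -
  have T: "Tm d \<in> carrier_mat d d" by (simp add: Tm_def)
  show ?thesis unfolding main1 M1T[symmetric] det_mult[OF carr(1) T] det_Tm by simp
qed

lemma TT_zero: "0 \<le> a \<Longrightarrow> N + a < 0 \<Longrightarrow> TT P a N = 0"
  unfolding TT_def
proof -
  assume a: "0 \<le> a" and N: "N + a < 0"
  have "(\<lambda>n. of_int (gbin a n) * bet ^ n * coeffU P (N + int n)) = (\<lambda>n. 0)"
  proof
    fix n
    show "of_int (gbin a n) * bet ^ n * coeffU P (N + int n) = 0"
    proof (cases "int n \<le> a")
      case True then show ?thesis using N by (simp add: coeffU_def)
    next
      case False then show ?thesis using a by (simp add: gbin_nonneg_big)
    qed
  qed
  then show "suminf (\<lambda>n. of_int (gbin a n) * bet ^ n * coeffU P (N + int n)) = 0" by simp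
qed

lemma main3:
  assumes d: "d \<ge> 1"
  shows "Gfact d (\<lambda>i. if i = 1 then k else 0) = Gmk d (k + d - 1) (int k)"
proof -
  define lam where "lam = (\<lambda>i::nat. if i = 1 then k else 0)"
  have "det (M2 d lam) = prod_list (diag_mat (M2 d lam))"
  proof (rule det_upper_triangular[OF _ carr(2)])
    show "upper_triangular (M2 d lam)"
      unfolding upper_triangular_def
    proof (intro allI impI)
      fix i j assume i: "i < dim_row (M2 d lam)" and j: "j < i"
      then have i': "i < d" using carr(2)[of d lam] by simp
      have l: "lam (i+1) = 0" using j by (simp add: lam_def)
      have e: "int (lam (i+1) + d - (i+1)) - int (d - 1 - j) = int j - int i"
        using i' j l by (simp add: of_nat_diff)
      show "M2 d lam $$ (i, j) = 0"
        unfolding M2_entry[OF i' order.strict_trans[OF j i']] e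
        by (rule TT_zero) (use j in auto)
    qed
  qed
  also have "\<dots> = (\<Prod>r<d. Gmk d (lam (r+1) + d - (r+1)) (int (lam (r+1))))"
    unfolding prod_list_diag_prod atLeast0LessThan
  proof (intro prod.cong)
    fix r assume r: "r \<in> {..<d}"
    have "M2 d lam $$ (r, r) = suminf (\<lambda>s. of_int (gbin 0 s) * bet ^ s * Gmk d (lam (r+1) + d - (r+1)) (int (lam (r+1)) + int s))"
      using r by (simp add: M2_def Let_def)
    also have "\<dots> = (\<Sum>s<1. of_int (gbin 0 s) * bet ^ s * Gmk d (lam (r+1) + d - (r+1)) (int (lam (r+1)) + int s))"
      by (rule suminf_finite') (simp add: gbin_zero)
    finally show "M2 d lam $$ (r, r) = Gmk d (lam (r+1) + d - (r+1)) (int (lam (r+1)))" by simp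
  qed (simp add: M2_def)
  also have "\<dots> = Gmk d (k + d - 1) (int k)"
  proof -
    obtain d' where d': "d = Suc d'" using d by (cases d) auto
    show ?thesis unfolding d' prod.lessThan_Suc_shift by (simp add: lam_def Gmk_0)
  qed
  finally show ?thesis unfolding main2 lam_def .
qed

theorem theorem1p1:
  fixes d :: nat and lam :: "nat \<Rightarrow> nat"
  assumes "d \<ge> 1"
    and "\<forall>i. 1 \<le> i \<and> i < d \<longrightarrow> lam (i+1) \<le> lam i"
  shows "Gfact d lam =
           det (mat d d (\<lambda>(r,c). let i = r+1; j = c+1 in
              suminf (\<lambda>s. of_int (gbin (int i - int d) s) * bet ^ s
                     * Gmk d (lam i + d - i) (int (lam i) + int j - int i + int s))))
       \<and> Gfact d lam =
           det (mat d d (\<lambda>(r,c). let i = r+1; j = c+1 in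
              suminf (\<lambda>s. of_int (gbin (int i - int j) s) * bet ^ s
                     * Gmk d (lam i + d - i) (int (lam i) + int j - int i + int s))))
       \<and> (\<forall>k::nat. Gfact d (\<lambda>i. if i = 1 then k else 0) = Gmk d (k + d - 1) (int k))"
  using main1[of d lam] main2[of d lam] main3[OF assms(1)] unfolding M1_def M2_def by blast

end
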